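(* Let $n\ge 3$ and $k\ge 0$ be integers and let $G_n^k$ be the graph of critical pairs of the crown $S_n^k$ (defined in the context). Then the maximum size of an independent set in $G_n^k$ is $(k+1)(k+2)/2$.
   Context: For integers $n\ge3$, $k\ge0$, the crown $S_n^k$ is the poset with ground set $A\cup B$, where $A=\{a_1,\dots,a_{n+k}\}$ and $B=\{b_1,\dots,b_{n+k}\}$, indices interpreted cyclically modulo $n+k$. Elements of $A$ are pairwise incomparable, elements of $B$ are pairwise incomparable, and for $a_i\in A$, $b_j\in B$: $a_i$ is incomparable to $b_j$ when $j\in\{i,i+1,\dots,i+k\}$ (mod $n+k$), and $a_i<b_j$ otherwise. Let $\mathrm{Inc}(A,B)$ be the set of pairs $(a,b)\in A\times B$ with $a$ incomparable to $b$. The graph $G_n^k$ has vertex set $\mathrm{Inc}(A,B)$, and $(a,b)$ is adjacent to $(x,y)$ if and only if $a<y$ and $x<b$ in $S_n^k$. *)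

theory Defs
  imports Main
begin

text \<open>Elements of the crown: A i and B i, indices 0..n+k-1 (cyclic mod n+k).\<close>
datatype crown_elt = CA nat | CB nat

definition crown_ground :: "nat \<Rightarrow> nat \<Rightarrow> crown_elt set" where
  "crown_ground n k = CA ` {..<n+k} \<union> CB ` {..<n+k}"

definition crown_less :: "nat \<Rightarrow> nat \<Rightarrow> crown_elt \<Rightarrow> crown_elt \<Rightarrow> bool" where
  "crown_less n k x y \<longleftrightarrow> (\<exists>i j. x = CA i \<and> y = CB j \<and> i < n+k \<and> j < n+k \<and>
      \<not> ((j + (n+k) - i) mod (n+k) \<le> k))"

definition crown_incomparable :: "nat \<Rightarrow> nat \<Rightarrow> crown_elt \<Rightarrow> crown_elt \<Rightarrow> bool" where
  "crown_incomparable n k x y \<longleftrightarrow> x \<noteq> y \<and> \<not> crown_less n k x y \<and> \<not> crown_less n k y x"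

definition crown_Inc :: "nat \<Rightarrow> nat \<Rightarrow> (crown_elt \<times> crown_elt) set" where
  "crown_Inc n k = {(a, b). a \<in> CA ` {..<n+k} \<and> b \<in> CB ` {..<n+k} \<and> crown_incomparable n k a b}"

definition G_adj :: "nat \<Rightarrow> nat \<Rightarrow> (crown_elt \<times> crown_elt) \<Rightarrow> (crown_elt \<times> crown_elt) \<Rightarrow> bool" where
  "G_adj n k p q \<longleftrightarrow> (case p of (a, b) \<Rightarrow> case q of (x, y) \<Rightarrow>
      crown_less n k a y \<and> crown_less n k x b)"

definition G_independent :: "nat \<Rightarrow> nat \<Rightarrow> (crown_elt \<times> crown_elt) set \<Rightarrow> bool" where
  "G_independent n k S \<longleftrightarrow> S \<subseteq> crown_Inc n k \<and> (\<forall>p\<in>S. \<forall>q\<in>S. \<not> G_adj n k p q)"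

definition G_independence_number :: "nat \<Rightarrow> nat \<Rightarrow> nat" where
  "G_independence_number n k = Max (card ` {S. G_independent n k S})"

end

theory Submission
  imports Defs
begin


definition fd :: "nat \<Rightarrow> nat \<Rightarrow> nat \<Rightarrow> nat" where
  "fd N a b = (b + N - a) mod N"

lemma fd_eq: "a < N \<Longrightarrow> b < N \<Longrightarrow> fd N a b = (if a \<le> b then b - a else b + N - a)"
proof (cases "a \<le> b")
  case True
  assume "a < N" "b < N"
  then have "b + N - a = (b - a) + N" using True by simp
  then have "(b + N - a) mod N = (b - a) mod N" by simp
  then show ?thesis using True \<open>b < N\<close> by (simp add: fd_def)
next
  case False
  assume "a < N" "b < N"
  then show ?thesis using False by (simp add: fd_def)
qed

lemma fd_inj: "w < N \<Longrightarrow> inj_on (fd N w) {..<N}"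
  by (auto simp: inj_on_def fd_eq split: if_splits)

lemma window_bound:
  assumes N: "N = n + k" "n \<ge> 2" and w: "w < N"
  and T: "T \<subseteq> {j. j < N \<and> fd N w j \<le> k}" "T \<noteq> {}"
  and Ow: "Ow \<subseteq> {w'. w' < N \<and> w' \<noteq> w \<and> (\<forall>j\<in>T. fd N w' j \<le> k)}"
  shows "card T + card Ow \<le> k + 1"
proof -
  define M where "M = fd N w ` T"
  define D where "D = fd N w ` Ow"
  have injT: "inj_on (fd N w) T" by (rule inj_on_subset[OF fd_inj[OF w]]) (use T(1) in auto)
  have injOw: "inj_on (fd N w) Ow" by (rule inj_on_subset[OF fd_inj[OF w]]) (use Ow in auto)
  have finT: "finite T" using T(1) by (rule finite_subset) auto
  have cM: "card M = card T" unfolding M_def using injT by (rule card_image)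
  have cD: "card D = card Ow" unfolding D_def using injOw by (rule card_image)
  have Mk: "\<forall>x\<in>M. x \<le> k" using T(1) unfolding M_def by auto
  have D1: "\<forall>d\<in>D. 1 \<le> d \<and> d < N" unfolding D_def
  proof
    fix d assume "d \<in> fd N w ` Ow"
    then obtain w' where "w' \<in> Ow" "d = fd N w w'" by auto
    then have "w' < N" "w' \<noteq> w" "d = fd N w w'" using Ow by auto
    then show "1 \<le> d \<and> d < N" using w by (auto simp: fd_eq)
  qed
  have key: "\<forall>x\<in>M. \<forall>d\<in>D. \<not> (x < d \<and> d < x + n)"
  proof (intro ballI)
    fix x d assume "x \<in> M" "d \<in> D"
    then obtain j w' where j: "j \<in> T" "x = fd N w j" and w': "w' \<in> Ow" "d = fd N w w'"
      unfolding M_def D_def by auto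
    have "j < N" "fd N w j \<le> k" using j T(1) by auto
    moreover have "w' < N" "w' \<noteq> w" "fd N w' j \<le> k" using w' j Ow by auto
    ultimately show "\<not> (x < d \<and> d < x + n)" using j(2) w'(2) w N
      by (auto simp: fd_eq split: if_splits)
  qed
  have Mne: "M \<noteq> {}" using T(2) unfolding M_def by auto
  have finM: "finite M" unfolding M_def using finT by simp
  define o1 where "o1 = Min M"
  have o1M: "o1 \<in> M" unfolding o1_def using finM Mne by simp
  have o1min: "\<forall>x\<in>M. o1 \<le> x" unfolding o1_def using finM by simp
  define A where "A = {o1+1..<o1+n}"
  define B where "B = (\<lambda>x. x + n - 1) ` (M - {o1})"
  have cA: "card A = n - 1" unfolding A_def by simp
  have cB: "card B = card M - 1"
  proof -
    have "inj_on (\<lambda>x. x + n - 1) (M - {o1})" using N(2) by (auto simp: inj_on_def)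
    then show ?thesis unfolding B_def using o1M finM by (simp add: card_image)
  qed
  have AB: "A \<inter> B = {}" unfolding A_def B_def using o1min N(2) by force
  have AD: "A \<inter> D = {}" unfolding A_def using key o1M by force
  have BD: "B \<inter> D = {}" unfolding B_def using key N(2) by force
  have sub: "A \<union> B \<union> D \<subseteq> {1..<N}" unfolding A_def B_def using Mk D1 N o1M by force
  have finD: "finite D" using D1 by (meson finite_subset subsetI finite_lessThan lessThan_iff)
  have finA: "finite A" "finite B" unfolding A_def B_def using finM by auto
  have "card (A \<union> B \<union> D) = card A + card B + card D"
    using AB AD BD finA finD by (simp add: card_Un_disjoint Int_Un_distrib2)
  moreover have "card (A \<union> B \<union> D) \<le> N - 1" using card_mono[OF _ sub] by simp
  moreover have "card M \<ge> 1" using Mne finM by (simp add: Suc_leI card_gt_0_iff)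
  ultimately show ?thesis using cA cB cM cD N by linarith
qed

lemma arith_aux: "2*r*(k+1) \<le> r*(r-1) + (k+1)*((k::nat)+2)"
proof -
  have h: "0 \<le> (int k + 1 - int r) * (int k + 2 - int r)"
  proof (cases "int r \<le> int k + 1")
    case True then show ?thesis by simp
  next
    case False then show ?thesis by (simp add: mult_nonpos_nonpos)
  qed
  have e: "int (r*(r-1)) = int r * int r - int r" by (cases r) (auto simp: algebra_simps)
  have e1: "int (2*r*(k+1)) = 2*int r*(int k+1)" by (simp add: algebra_simps)
  have e2: "int (r*(r-1) + (k+1)*(k+2)) = (int r * int r - int r) + (int k + 1)*(int k + 2)"
  proof -
    have "int (r*(r-1) + (k+1)*(k+2)) = int (r*(r-1)) + int (k+1) * int (k+2)"
      by (simp only: of_nat_add of_nat_mult)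
    then show ?thesis using e by (simp add: algebra_simps)
  qed
  have e3: "(int k + 1 - int r) * (int k + 2 - int r) = (int r * int r - int r + (int k + 1)*(int k + 2)) - 2*int r*(int k+1)"
    by (simp add: algebra_simps)
  have "int (2*r*(k+1)) \<le> int (r*(r-1) + (k+1)*(k+2))"
    using h e1 e2 e3 by linarith
  then show ?thesis by linarith
qed

lemma upper:
  assumes N: "N = n + k" "n \<ge> 2" and S: "S \<subseteq> {..<N} \<times> {..<N}"
  and inc: "\<forall>(i,j)\<in>S. fd N i j \<le> k"
  and ind: "\<forall>(i,j)\<in>S. \<forall>(x,y)\<in>S. fd N i y \<le> k \<or> fd N x j \<le> k"
  shows "2 * card S \<le> (k+1)*(k+2)"
proof -
  define U where "U = fst ` S"
  define T where "T w = {j. (w,j) \<in> S}" for w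
  define Out where "Out w = {w' \<in> U. w' \<noteq> w \<and> (\<forall>j\<in>T w. fd N w' j \<le> k)}" for w
  have finS: "finite S" using S by (rule finite_subset) auto
  have finU: "finite U" unfolding U_def using finS by simp
  have UN: "U \<subseteq> {..<N}" unfolding U_def using S by auto
  have finT: "finite (T w)" for w
  proof -
    have "T w \<subseteq> snd ` S" unfolding T_def by force
    then show ?thesis using finS by (meson finite_imageI finite_subset)
  qed
  have finO: "finite (Out w)" for w unfolding Out_def using finU by simp
  have SS: "S = Sigma U T" unfolding U_def T_def by force
  have cS: "card S = (\<Sum>w\<in>U. card (T w))" unfolding SS using finU finT by (simp add: card_SigmaI)
  define P where "P = Sigma U Out"
  have cP: "card P = (\<Sum>w\<in>U. card (Out w))" unfolding P_def using finU finO by (simp add: card_SigmaI)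
  have each: "card (T w) + card (Out w) \<le> k + 1" if "w \<in> U" for w
  proof (rule window_bound[OF N])
    show "w < N" using that UN by auto
    show "T w \<subseteq> {j. j < N \<and> fd N w j \<le> k}" using S inc unfolding T_def by auto
    show "T w \<noteq> {}" using that unfolding U_def T_def by force
    show "Out w \<subseteq> {w'. w' < N \<and> w' \<noteq> w \<and> (\<forall>j\<in>T w. fd N w' j \<le> k)}"
      unfolding Out_def using UN by auto
  qed
  have sum1: "card S + card P \<le> card U * (k+1)"
  proof -
    have "card S + card P = (\<Sum>w\<in>U. card (T w) + card (Out w))" using cS cP by (simp add: sum.distrib)
    also have "\<dots> \<le> (\<Sum>w\<in>U. k + 1)" by (rule sum_mono) (use each in auto)
    finally show ?thesis by simp
  qed
  define Off where "Off = Sigma U (\<lambda>a. U - {a})"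
  have cOff: "card Off = card U * (card U - 1)"
    unfolding Off_def using finU by (simp add: card_SigmaI)
  have offsub: "Off \<subseteq> P \<union> (\<lambda>(a,b). (b,a)) ` P"
  proof
    fix z assume "z \<in> Off"
    then obtain a b where z: "z = (a,b)" "a \<in> U" "b \<in> U" "a \<noteq> b" unfolding Off_def by auto
    show "z \<in> P \<union> (\<lambda>(a,b). (b,a)) ` P"
    proof (rule ccontr)
      assume "z \<notin> P \<union> (\<lambda>(a,b). (b,a)) ` P"
      then have "b \<notin> Out a" "a \<notin> Out b" using z unfolding P_def by (auto simp: image_iff)
      then obtain j j' where "j \<in> T a" "\<not> fd N b j \<le> k" "j' \<in> T b" "\<not> fd N a j' \<le> k"
        using z unfolding Out_def by auto
      then show False using ind unfolding T_def by fastforce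
    qed
  qed
  have finP: "finite P" unfolding P_def using finU finO by simp
  have "card Off \<le> card (P \<union> (\<lambda>(a,b). (b,a)) ` P)"
    by (rule card_mono) (use finP offsub in auto)
  also have "\<dots> \<le> card P + card ((\<lambda>(a,b). (b,a)) ` P)" by (rule card_Un_le)
  also have "\<dots> \<le> card P + card P" using card_image_le[OF finP] by simp
  finally have "card U * (card U - 1) \<le> 2 * card P" using cOff by simp
  then have "2 * card S + card U * (card U - 1) \<le> 2 * (card U) * (k+1)" using sum1 by simp
  moreover have "2 * (card U) * (k+1) \<le> card U * (card U - 1) + (k+1)*(k+2)" by (rule arith_aux)
  ultimately show ?thesis by linarith
qed


lemma less_CA_CB: "crown_less n k (CA i) (CB j) \<longleftrightarrow> i < n+k \<and> j < n+k \<and> \<not> fd (n+k) i j \<le> k"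
  by (simp add: crown_less_def fd_def)

lemma not_less_CB: "\<not> crown_less n k (CB j) x"
  by (simp add: crown_less_def)

lemma Inc_iff: "(a,b) \<in> crown_Inc n k \<longleftrightarrow>
   (\<exists>i j. a = CA i \<and> b = CB j \<and> i < n+k \<and> j < n+k \<and> fd (n+k) i j \<le> k)"
  by (auto simp: crown_Inc_def crown_incomparable_def less_CA_CB not_less_CB)

lemma indep_card:
  assumes n: "n \<ge> 2" and S: "G_independent n k S"
  shows "2 * card S \<le> (k+1)*(k+2)"
proof -
  define N where "N = n + k"
  define S' where "S' = {(i,j). (CA i, CB j) \<in> S}"
  define f where "f = (\<lambda>(i::nat,j::nat). (CA i, CB j))"
  have Sinc: "S \<subseteq> crown_Inc n k" using S by (simp add: G_independent_def)
  have Seq: "S = f ` S'"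
  proof
    show "S \<subseteq> f ` S'"
    proof
      fix z assume "z \<in> S"
      moreover obtain a b where ab: "z = (a,b)" by fastforce
      ultimately have "(a,b) \<in> crown_Inc n k" using Sinc by auto
      then obtain i j where "a = CA i" "b = CB j" by (auto simp: Inc_iff)
      then have "z = (CA i, CB j)" "(CA i, CB j) \<in> S" using ab \<open>z \<in> S\<close> by auto
      then show "z \<in> f ` S'" unfolding f_def S'_def by (auto simp: image_iff)
    qed
    show "f ` S' \<subseteq> S" unfolding f_def S'_def by auto
  qed
  have injf: "inj f" unfolding f_def by (auto simp: inj_on_def)
  have cS: "card S = card S'" unfolding Seq by (rule card_image) (rule inj_on_subset[OF injf], simp)
  have memS: "(i,j) \<in> S' \<Longrightarrow> i < N \<and> j < N \<and> fd N i j \<le> k" for i j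
    using Sinc unfolding S'_def N_def by (auto simp: Inc_iff)
  have "2 * card S' \<le> (k+1)*(k+2)"
  proof (rule upper[of N n k])
    show "N = n + k" by (simp add: N_def)
    show "n \<ge> 2" by (rule n)
    show "S' \<subseteq> {..<N} \<times> {..<N}" using memS by auto
    show "\<forall>(i,j)\<in>S'. fd N i j \<le> k" using memS by auto
    show "\<forall>(i,j)\<in>S'. \<forall>(x,y)\<in>S'. fd N i y \<le> k \<or> fd N x j \<le> k"
    proof (intro ballI, clarify)
      fix i j x y assume a: "(i,j) \<in> S'" "(x,y) \<in> S'" "\<not> fd N x j \<le> k"
      have "\<not> G_adj n k (CA i, CB j) (CA x, CB y)"
        using S a unfolding G_independent_def S'_def by auto
      then have "\<not> (crown_less n k (CA i) (CB y) \<and> crown_less n k (CA x) (CB j))"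
        by (simp add: G_adj_def)
      then show "fd N i y \<le> k" using memS[OF a(1)] memS[OF a(2)] a(3)
        by (auto simp: less_CA_CB N_def)
    qed
  qed
  then show ?thesis using cS by simp
qed

lemma tri_sum: "2 * (\<Sum>j\<le>k. Suc j) = (k+1)*(k+2)"
  by (induction k) (simp_all add: algebra_simps)

lemma lower:
  assumes n: "n \<ge> 1"
  shows "\<exists>S. G_independent n k S \<and> 2 * card S = (k+1)*(k+2)"
proof -
  define Tri where "Tri = {(i::nat,j::nat). j \<le> k \<and> i \<le> j}"
  define f where "f = (\<lambda>(i::nat,j::nat). (CA i, CB j))"
  have injf: "inj f" unfolding f_def by (auto simp: inj_on_def)
  have TriEq: "Tri = (\<lambda>(j,i). (i,j)) ` (SIGMA j:{..k}. {..j})" unfolding Tri_def by force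
  have "card Tri = card (SIGMA j:{..k}. {..j})" unfolding TriEq
    by (rule card_image) (auto simp: inj_on_def)
  also have "\<dots> = (\<Sum>j\<le>k. Suc j)" by simp
  finally have cT: "2 * card Tri = (k+1)*(k+2)" using tri_sum by simp
  have cS: "card (f ` Tri) = card Tri" by (rule card_image) (rule inj_on_subset[OF injf], simp)
  have fdle: "i \<le> j \<Longrightarrow> j < n + k \<Longrightarrow> fd (n+k) i j = j - i" for i j
    by (simp add: fd_eq)
  have "G_independent n k (f ` Tri)"
    unfolding G_independent_def
  proof (intro conjI)
    show "f ` Tri \<subseteq> crown_Inc n k"
      using n unfolding f_def Tri_def by (auto simp: Inc_iff fdle)
    show "\<forall>p\<in>f ` Tri. \<forall>q\<in>f ` Tri. \<not> G_adj n k p q"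
    proof (intro ballI)
      fix p q assume "p \<in> f ` Tri" "q \<in> f ` Tri"
      then obtain i j x y where p: "p = (CA i, CB j)" "j \<le> k" "i \<le> j"
        and q: "q = (CA x, CB y)" "y \<le> k" "x \<le> y"
        unfolding f_def Tri_def by auto
      show "\<not> G_adj n k p q"
      proof (cases "i \<le> y")
        case True
        then have "fd (n+k) i y \<le> k" using p q n by (simp add: fdle)
        then show ?thesis using p q by (simp add: G_adj_def less_CA_CB)
      next
        case False
        then have "fd (n+k) x j \<le> k" using p q n by (simp add: fdle)
        then show ?thesis using p q by (simp add: G_adj_def less_CA_CB)
      qed
    qed
  qed
  then show ?thesis using cT cS by auto
qed

theorem theorem1p2:
  fixes n k :: nat
  assumes "n \<ge> 3"
  shows "G_independence_number n k = (k + 1) * (k + 2) div 2"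
proof -
  define A where "A = card ` {S. G_independent n k S}"
  have finInc: "finite (crown_Inc n k)"
  proof (rule finite_subset)
    show "crown_Inc n k \<subseteq> (CA ` {..<n+k}) \<times> (CB ` {..<n+k})"
      unfolding crown_Inc_def by auto
  qed simp
  have "{S. G_independent n k S} \<subseteq> Pow (crown_Inc n k)"
    by (auto simp: G_independent_def)
  then have finA: "finite A" unfolding A_def using finInc
    by (meson finite_Pow_iff finite_imageI finite_subset)
  obtain S0 where S0: "G_independent n k S0" "2 * card S0 = (k+1)*(k+2)"
    using lower[of n k] assms by auto
  have inA: "(k + 1) * (k + 2) div 2 \<in> A"
    unfolding A_def using S0 by (metis (mono_tags) image_eqI mem_Collect_eq nonzero_mult_div_cancel_left zero_neq_numeral)
  have le: "\<forall>y\<in>A. y \<le> (k + 1) * (k + 2) div 2"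
    unfolding A_def using indep_card[of n k] assms by fastforce
  show ?thesis unfolding G_independence_number_def A_def[symmetric]
    by (rule Max_eqI[OF finA]) (use le inA in auto)
qed

end
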